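(* In the setting of the generalized Hubbard Hamiltonian $H_{\mathrm{gen}}$ on a finite graph $G=(V,E)$, assume there is no spin-orbit coupling, i.e. $t^{\uparrow,\downarrow}_{\boldsymbol r,\boldsymbol r'}=t^{\downarrow,\uparrow}_{\boldsymbol r,\boldsymbol r'}=0$ for all edges, and that $t^{\uparrow,\uparrow}_{\boldsymbol r,\boldsymbol r'}\neq0\neq t^{\downarrow,\downarrow}_{\boldsymbol r,\boldsymbol r'}$ for every edge, and let $G$ be connected. Then nonzero numbers $q_{\boldsymbol r}$ satisfy the edge condition $q_{\boldsymbol r}t^{\sigma',\sigma}_{\boldsymbol r',\boldsymbol r}s_\sigma+q_{\boldsymbol r'}t^{\bar\sigma,\bar\sigma'}_{\boldsymbol r,\boldsymbol r'}s_{\sigma'}=0$ for all edges and all $\sigma,\sigma'$ if and only if, for every edge, $q_{\boldsymbol r}/q_{\boldsymbol r'}=-t^{\downarrow,\downarrow}_{\boldsymbol r,\boldsymbol r'}/\overline{t^{\uparrow,\uparrow}_{\boldsymbol r,\boldsymbol r'}}=-t^{\uparrow,\uparrow}_{\boldsymbol r,\boldsymbol r'}/\overline{t^{\downarrow,\downarrow}_{\boldsymbol r,\boldsymbol r'}}$. In that case $|t^{\uparrow,\uparrow}_{\boldsymbol r,\boldsymbol r'}|=|t^{\downarrow,\downarrow}_{\boldsymbol r,\boldsymbol r'}|$ and $|q_{\boldsymbol r}|$ is independent of $\boldsymbol r$; normalizing $q_{\boldsymbol r}=e^{i\phi_{\boldsymbol r}}$ and writing $t^{\uparrow,\uparrow}_{\boldsymbol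 r,\boldsymbol r'}=t_{\boldsymbol r,\boldsymbol r'}e^{i\theta^{\uparrow\uparrow}_{\boldsymbol r,\boldsymbol r'}}$, $t^{\downarrow,\downarrow}_{\boldsymbol r,\boldsymbol r'}=t_{\boldsymbol r,\boldsymbol r'}e^{i\theta^{\downarrow\downarrow}_{\boldsymbol r,\boldsymbol r'}}$ with $t_{\boldsymbol r,\boldsymbol r'}>0$, the condition is equivalent to $\theta^{\uparrow\uparrow}_{\boldsymbol r,\boldsymbol r'}+\theta^{\downarrow\downarrow}_{\boldsymbol r,\boldsymbol r'}+\pi\equiv\phi_{\boldsymbol r}-\phi_{\boldsymbol r'}\pmod{2\pi}$ for every edge. Consequently, if in addition $U_{\boldsymbol r}-\mu_{\boldsymbol r,\uparrow}-\mu_{\boldsymbol r,\downarrow}=\mathcal{E}$ for all $\boldsymbol r$, then $[H_{\mathrm{gen}},\eta^\dagger]=\mathcal{E}\eta^\dagger$ with $\eta^\dagger=\sum_{\boldsymbol r}e^{i\phi_{\boldsymbol r}}c^\dagger_{\boldsymbol r,\uparrow}c^\dagger_{\boldsymbol r,\downarrow}$.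
   Context: Generalized Hubbard Hamiltonian on a finite simple graph $G=(V,E)$ (each edge with a fixed orientation $(\boldsymbol r,\boldsymbol r')$): $H_{\mathrm{gen}}=-\sum_{\sigma,\sigma'}\sum_{\{\boldsymbol r,\boldsymbol r'\}\in E}(t^{\sigma,\sigma'}_{\boldsymbol r,\boldsymbol r'}c^\dagger_{\boldsymbol r,\sigma}c_{\boldsymbol r',\sigma'}+t^{\sigma',\sigma}_{\boldsymbol r',\boldsymbol r}c^\dagger_{\boldsymbol r',\sigma'}c_{\boldsymbol r,\sigma})-\sum_{\boldsymbol r,\sigma}\mu_{\boldsymbol r,\sigma}\hat n_{\boldsymbol r,\sigma}+\sum_{\boldsymbol r}U_{\boldsymbol r}\hat n_{\boldsymbol r,\uparrow}\hat n_{\boldsymbol r,\downarrow}$ with $t^{\sigma,\sigma'}_{\boldsymbol r,\boldsymbol r'}=\overline{t^{\sigma',\sigma}_{\boldsymbol r',\boldsymbol r}}$ and real $\mu_{\boldsymbol r,\sigma},U_{\boldsymbol r}$; $c,c^\dagger$ are spin-1/2 fermion operators, $\hat n_{\boldsymbol r,\sigma}=c^\dagger_{\boldsymbol r,\sigma}c_{\boldsymbol r,\sigma}$; $s_\uparrow=1,s_\downarrow=-1$, $\bar\uparrow=\downarrow,\bar\downarrow=\uparrow$. *)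

theory Defs
  imports Complex_Main
begin

datatype spin = Up | Dn

definition spin_s :: "spin \<Rightarrow> complex" where
  "spin_s \<sigma> = (if \<sigma> = Up then 1 else -1)"

definition spin_bar :: "spin \<Rightarrow> spin" where
  "spin_bar \<sigma> = (if \<sigma> = Up then Dn else Up)"

text \<open>A state is a complex function on occupation configurations (sets of occupied modes).
  Creation/annihilation operators are defined via a Jordan-Wigner ordering of modes.\<close>

type_synonym 'v fock = "('v \<times> spin) set \<Rightarrow> complex"
type_synonym 'v op = "'v fock \<Rightarrow> 'v fock"

definition mode_less :: "('v::linorder \<times> spin) \<Rightarrow> ('v \<times> spin) \<Rightarrow> bool" where
  "mode_less a b \<longleftrightarrow> fst a < fst b \<or> (fst a = fst b \<and> snd a = Up \<and> snd b = Dn)"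

definition jw_sign :: "('v::linorder \<times> spin) set \<Rightarrow> ('v \<times> spin) \<Rightarrow> complex" where
  "jw_sign S m = (-1) ^ card {k \<in> S. mode_less k m}"

definition cdag :: "('v::linorder \<times> spin) \<Rightarrow> 'v op" where
  "cdag m \<psi> = (\<lambda>S. if m \<in> S then jw_sign (S - {m}) m * \<psi> (S - {m}) else 0)"

definition cann :: "('v::linorder \<times> spin) \<Rightarrow> 'v op" where
  "cann m \<psi> = (\<lambda>S. if m \<notin> S then jw_sign S m * \<psi> (insert m S) else 0)"

definition numop :: "('v::linorder \<times> spin) \<Rightarrow> 'v op" where
  "numop m \<psi> = cdag m (cann m \<psi>)"

definition commutator :: "'v op \<Rightarrow> 'v op \<Rightarrow> 'v op" where
  "commutator A B \<psi> = (\<lambda>S. A (B \<psi>) S - B (A \<psi>) S)"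

text \<open>E is the set of oriented edges (r,r'); the vertex set is the whole finite type 'v.\<close>

definition H_gen ::
  "(spin \<Rightarrow> spin \<Rightarrow> 'v \<Rightarrow> 'v \<Rightarrow> complex) \<Rightarrow> ('v \<Rightarrow> spin \<Rightarrow> real) \<Rightarrow> ('v \<Rightarrow> real)
   \<Rightarrow> ('v::{finite,linorder} \<times> 'v) set \<Rightarrow> 'v op" where
  "H_gen t \<mu> U E \<psi> = (\<lambda>S.
      - (\<Sum>\<sigma>\<in>{Up, Dn}. \<Sum>\<sigma>'\<in>{Up, Dn}. \<Sum>(r, r')\<in>E.
           t \<sigma> \<sigma>' r r' * cdag (r, \<sigma>) (cann (r', \<sigma>') \<psi>) S
         + t \<sigma>' \<sigma> r' r * cdag (r', \<sigma>') (cann (r, \<sigma>) \<psi>) S)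
      - (\<Sum>r\<in>UNIV. \<Sum>\<sigma>\<in>{Up, Dn}. complex_of_real (\<mu> r \<sigma>) * numop (r, \<sigma>) \<psi> S)
      + (\<Sum>r\<in>UNIV. complex_of_real (U r) * numop (r, Up) (numop (r, Dn) \<psi>) S))"

definition eta_dag :: "('v::{finite,linorder} \<Rightarrow> real) \<Rightarrow> 'v op" where
  "eta_dag \<phi> \<psi> = (\<lambda>S. \<Sum>r\<in>UNIV. exp (\<i> * complex_of_real (\<phi> r)) * cdag (r, Up) (cdag (r, Dn) \<psi>) S)"

definition simple_oriented :: "('v \<times> 'v) set \<Rightarrow> bool" where
  "simple_oriented E \<longleftrightarrow> (\<forall>(r, r')\<in>E. r \<noteq> r' \<and> (r', r) \<notin> E)"

definition graph_connected :: "('v \<times> 'v) set \<Rightarrow> bool" where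
  "graph_connected E \<longleftrightarrow> (\<forall>x y. (x, y) \<in> (E \<union> E\<inverse>)\<^sup>*)"

definition edge_cond ::
  "(spin \<Rightarrow> spin \<Rightarrow> 'v \<Rightarrow> 'v \<Rightarrow> complex) \<Rightarrow> ('v \<times> 'v) set \<Rightarrow> ('v \<Rightarrow> complex) \<Rightarrow> bool" where
  "edge_cond t E q \<longleftrightarrow> (\<forall>(r, r')\<in>E. \<forall>\<sigma> \<sigma>'.
      q r * t \<sigma>' \<sigma> r' r * spin_s \<sigma> + q r' * t (spin_bar \<sigma>) (spin_bar \<sigma>') r r' * spin_s \<sigma>' = 0)"

end

theory Submission imports Defs "HOL-Analysis.Complex_Transcendental" begin

lemma finS: "finite (S :: ('v::finite \<times> spin) set)"
proof -
  have "(UNIV::spin set) = {Up, Dn}" by (auto intro: spin.exhaust)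
  hence "finite (UNIV::spin set)" by (metis finite.emptyI finite.insertI)
  hence "finite (UNIV :: ('v \<times> spin) set)" by (simp add: finite_Prod_UNIV)
  thus ?thesis by (rule rev_finite_subset) simp
qed

lemma ml_irrefl: "\<not> mode_less a a" by (auto simp: mode_less_def)
lemma ml_asym: "mode_less a b \<Longrightarrow> \<not> mode_less b a" by (auto simp: mode_less_def)
lemma ml_total: "a \<noteq> b \<Longrightarrow> mode_less a b \<or> mode_less b a"
proof -
  assume ne: "a \<noteq> b"
  obtain a1 s1 b1 s2 where ab: "a = (a1, s1)" "b = (b1, s2)" by (cases a, cases b)
  show ?thesis
  proof (cases "a1 = b1")
    case True
    hence "s1 \<noteq> s2" using ne ab by simp
    thus ?thesis using True ab by (cases s1; cases s2) (simp_all add: mode_less_def)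
  next
    case False
    hence "a1 < b1 \<or> b1 < a1" by (simp add: neq_iff)
    thus ?thesis using ab by (auto simp: mode_less_def)
  qed
qed

lemma jw_insert:
  assumes "x \<notin> (S :: ('v::{finite,linorder} \<times> spin) set)"
  shows "jw_sign (insert x S) m = (if mode_less x m then -1 else 1) * jw_sign S m"
proof (cases "mode_less x m")
  case True
  have "{k \<in> insert x S. mode_less k m} = insert x {k \<in> S. mode_less k m}" using True by auto
  moreover have "card (insert x {k \<in> S. mode_less k m}) = Suc (card {k \<in> S. mode_less k m})"
    using assms finS[of "{k \<in> S. mode_less k m}"] by (simp add: card_insert_disjoint)
  ultimately show ?thesis using True by (simp add: jw_sign_def)
next
  case False
  have "{k \<in> insert x S. mode_less k m} = {k \<in> S. mode_less k m}" using False by auto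
  thus ?thesis using False by (simp add: jw_sign_def)
qed

lemma jw_remove:
  assumes "x \<in> (S :: ('v::{finite,linorder} \<times> spin) set)"
  shows "jw_sign S m = (if mode_less x m then -1 else 1) * jw_sign (S - {x}) m"
proof -
  have "S = insert x (S - {x})" using assms by auto
  hence "jw_sign S m = jw_sign (insert x (S - {x})) m" by simp
  also have "\<dots> = (if mode_less x m then -1 else 1) * jw_sign (S - {x}) m"
    by (rule jw_insert) simp
  finally show ?thesis .
qed

lemma jw_sq: "jw_sign S m * jw_sign S m = 1"
  by (simp add: jw_sign_def flip: power_add)

lemma CC_same: "cdag a (cdag a \<psi>) = (\<lambda>S. 0)"
  by (auto simp: cdag_def)

lemma CC_anti:
  fixes a b :: "'v::{finite,linorder} \<times> spin"
  assumes ab: "a \<noteq> b"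
  shows "cdag a (cdag b \<psi>) = (\<lambda>S. - cdag b (cdag a \<psi>) S)"
proof
  fix S
  show "cdag a (cdag b \<psi>) S = - cdag b (cdag a \<psi>) S"
  proof (cases "a \<in> S \<and> b \<in> S")
    case True
    have e: "S - {a} - {b} = S - {b} - {a}" by auto
    have s1: "jw_sign (S - {a}) a = (if mode_less b a then -1 else 1) * jw_sign (S - {a} - {b}) a"
      by (rule jw_remove) (use True ab in auto)
    have s2: "jw_sign (S - {b}) b = (if mode_less a b then -1 else 1) * jw_sign (S - {b} - {a}) b"
      by (rule jw_remove) (use True ab in auto)
    have cb: "mode_less b a \<longleftrightarrow> \<not> mode_less a b" using ml_total[OF ab] ml_asym[of b a] ml_asym[of a b] by blast
    have L: "cdag a (cdag b \<psi>) S = jw_sign (S - {a}) a * (jw_sign (S - {a} - {b}) b * \<psi> (S - {a} - {b}))"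
      using True ab by (simp add: cdag_def)
    have R: "cdag b (cdag a \<psi>) S = jw_sign (S - {b}) b * (jw_sign (S - {b} - {a}) a * \<psi> (S - {b} - {a}))"
      using True ab by (simp add: cdag_def)
    show ?thesis unfolding L R s1 s2 e using cb by (cases "mode_less a b") simp_all
  next
    case False
    thus ?thesis by (auto simp: cdag_def)
  qed
qed

lemma AC:
  fixes b c :: "'v::{finite,linorder} \<times> spin"
  shows "cann b (cdag c \<psi>) = (\<lambda>S. (if b = c then \<psi> S else 0) - cdag c (cann b \<psi>) S)"
proof
  fix S
  show "cann b (cdag c \<psi>) S = (if b = c then \<psi> S else 0) - cdag c (cann b \<psi>) S"
  proof (cases "b = c")
    case True
    show ?thesis
    proof (cases "b \<in> S")
      case True
      have "insert b (S - {b}) = S" using True by auto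
      thus ?thesis using True \<open>b = c\<close> jw_sq[of "S - {b}" b] by (auto simp: cdag_def cann_def)
    next
      case False
      have "insert b S - {b} = S" using False by auto
      thus ?thesis using False \<open>b = c\<close> jw_sq[of S b] by (auto simp: cdag_def cann_def)
    qed
  next
    case bc: False
    show ?thesis
    proof (cases "b \<notin> S \<and> c \<in> S")
      case True
      have e: "insert b S - {c} = insert b (S - {c})" using bc by auto
      have s1: "jw_sign S b = (if mode_less c b then -1 else 1) * jw_sign (S - {c}) b"
        by (rule jw_remove) (use True in auto)
      have s2: "jw_sign (insert b (S - {c})) c = (if mode_less b c then -1 else 1) * jw_sign (S - {c}) c"
        by (rule jw_insert) (use True in auto)
      have cb: "mode_less c b \<longleftrightarrow> \<not> mode_less b c" using ml_total[OF bc] ml_asym[of b c] ml_asym[of c b] by blast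
      have L: "cann b (cdag c \<psi>) S = jw_sign S b * (jw_sign (insert b (S - {c})) c * \<psi> (insert b (S - {c})))"
        using True e by (simp add: cdag_def cann_def)
      have R: "cdag c (cann b \<psi>) S = jw_sign (S - {c}) c * (jw_sign (S - {c}) b * \<psi> (insert b (S - {c})))"
        using True by (simp add: cdag_def cann_def)
      show ?thesis unfolding L R s1 s2 using bc cb by (cases "mode_less b c") simp_all
    next
      case False
      thus ?thesis using bc by (auto simp: cdag_def cann_def)
    qed
  qed
qed

definition lin :: "('v fock \<Rightarrow> 'v fock) \<Rightarrow> bool" where
  "lin A \<longleftrightarrow> (\<forall>f g. A (\<lambda>S. f S + g S) = (\<lambda>S. A f S + A g S)) \<and> (\<forall>c f. A (\<lambda>S. c * f S) = (\<lambda>S. c * A f S))"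

lemma lin_add: "lin A \<Longrightarrow> A (\<lambda>S. f S + g S) = (\<lambda>S. A f S + A g S)" by (simp add: lin_def)
lemma lin_scal: "lin A \<Longrightarrow> A (\<lambda>S. c * f S) = (\<lambda>S. c * A f S)" by (simp add: lin_def)
lemma lin_zero: "lin A \<Longrightarrow> A (\<lambda>S. 0) = (\<lambda>S. 0)"
  using lin_scal[of A 0 "\<lambda>S. 0"] by simp
lemma lin_neg: "lin A \<Longrightarrow> A (\<lambda>S. - f S) = (\<lambda>S. - A f S)"
  using lin_scal[of A "-1" f] by simp
lemma lin_diff: "lin A \<Longrightarrow> A (\<lambda>S. f S - g S) = (\<lambda>S. A f S - A g S)"
proof -
  assume l: "lin A"
  have "A (\<lambda>S. f S - g S) = A (\<lambda>S. f S + (\<lambda>S. - g S) S)" by simp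
  also have "\<dots> = (\<lambda>S. A f S + A (\<lambda>S. - g S) S)" by (rule lin_add[OF l])
  finally show ?thesis using lin_neg[OF l, of g] by simp
qed
lemma lin_sum: assumes lA: "lin A" and fX: "finite X" shows "A (\<lambda>S. \<Sum>x\<in>X. f x S) = (\<lambda>S. \<Sum>x\<in>X. A (f x) S)"
  using fX
proof (induction X rule: finite_induct)
  case empty thus ?case by (simp add: lin_zero[OF lA])
next
  case (insert x F)
  have "A (\<lambda>S. \<Sum>y\<in>insert x F. f y S) = A (\<lambda>S. f x S + (\<lambda>S. \<Sum>y\<in>F. f y S) S)"
    using insert by simp
  also have "\<dots> = (\<lambda>S. A (f x) S + A (\<lambda>S. \<Sum>y\<in>F. f y S) S)"
    using lin_add[OF lA, of "f x" "\<lambda>S. \<Sum>y\<in>F. f y S"] by simp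
  finally show ?case using insert by simp
qed
lemma lin_if: "lin A \<Longrightarrow> A (\<lambda>S. if P then f S else 0) = (\<lambda>S. if P then A f S else 0)"
  by (cases P) (simp_all add: lin_zero)

lemma lin_cdag: "lin (cdag m)" by (auto simp: lin_def cdag_def fun_eq_iff algebra_simps)
lemma lin_cann: "lin (cann m)" by (auto simp: lin_def cann_def fun_eq_iff algebra_simps)
lemma lin_comp: "lin A \<Longrightarrow> lin B \<Longrightarrow> lin (\<lambda>\<psi>. A (B \<psi>))"
  by (simp add: lin_def)
lemma lin_numop: "lin (numop m)"
  using lin_comp[OF lin_cdag lin_cann] by (simp add: numop_def[abs_def])

lemmas cdag_lin = lin_add[OF lin_cdag] lin_scal[OF lin_cdag] lin_zero[OF lin_cdag] lin_neg[OF lin_cdag] lin_diff[OF lin_cdag] lin_if[OF lin_cdag]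
lemmas cann_lin = lin_add[OF lin_cann] lin_scal[OF lin_cann] lin_zero[OF lin_cann] lin_neg[OF lin_cann] lin_diff[OF lin_cann] lin_if[OF lin_cann]
lemmas numop_lin = lin_add[OF lin_numop] lin_scal[OF lin_numop] lin_zero[OF lin_numop] lin_neg[OF lin_numop] lin_diff[OF lin_numop] lin_if[OF lin_numop]

lemma N1: "numop a (cdag a \<phi>) = cdag (a::'v::{finite,linorder}\<times>spin) \<phi>"
  by (simp add: numop_def AC cdag_lin CC_same)
lemma N2: "cdag a (numop a \<phi>) = (\<lambda>S. 0)"
  by (simp add: numop_def CC_same)
lemma N3: assumes "a \<noteq> (b::'v::{finite,linorder}\<times>spin)"
  shows "numop a (cdag b \<phi>) = cdag b (numop a \<phi>)"
  using assms by (simp add: numop_def AC cdag_lin CC_anti[OF assms, of "cann a \<phi>"])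

lemma CCC: "cdag a (cdag c (cdag d \<phi>)) = cdag c (cdag d (cdag (a::'v::{finite,linorder}\<times>spin) \<phi>))"
proof (cases "a = c")
  case True
  show ?thesis
  proof (cases "d = c")
    case True thus ?thesis using \<open>a = c\<close> by (simp add: CC_same cdag_lin)
  next
    case False thus ?thesis using \<open>a = c\<close> by (simp add: CC_same cdag_lin CC_anti[OF False, of \<phi>])
  qed
next
  case ac: False
  show ?thesis
  proof (cases "a = d")
    case True
    have "cdag c (cdag d \<phi>) = (\<lambda>S. - cdag d (cdag c \<phi>) S)" using CC_anti[of c d] ac True by auto
    thus ?thesis using True by (simp add: CC_same cdag_lin)
  next
    case False thus ?thesis using ac
      by (simp add: cdag_lin CC_anti[OF ac, of "cdag d \<phi>"] CC_anti[OF False, of \<phi>])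
  qed
qed

lemma L_hop: fixes a :: "'v::{finite,linorder}\<times>spin" shows "cdag a (cann b (cdag c (cdag d \<psi>))) = (\<lambda>S. cdag c (cdag d (cdag a (cann b \<psi>))) S
   + (if b = c then cdag a (cdag d \<psi>) S else 0) - (if b = d then cdag a (cdag c \<psi>) S else 0))"
proof -
  have 1: "cann b (cdag c (cdag d \<psi>)) = (\<lambda>S. (if b = c then cdag d \<psi> S else 0) - cdag c (cann b (cdag d \<psi>)) S)"
    using AC[of b c "cdag d \<psi>"] .
  have 2: "cann b (cdag d \<psi>) = (\<lambda>S. (if b = d then \<psi> S else 0) - cdag d (cann b \<psi>) S)"
    using AC[of b d \<psi>] .
  have "cann b (cdag c (cdag d \<psi>)) = (\<lambda>S. (if b = c then cdag d \<psi> S else 0) - ((if b = d then cdag c \<psi> S else 0) - cdag c (cdag d (cann b \<psi>)) S))"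
    unfolding 1 2 by (simp only: cdag_lin)
  hence "cdag a (cann b (cdag c (cdag d \<psi>))) = (\<lambda>S. (if b = c then cdag a (cdag d \<psi>) S else 0) - ((if b = d then cdag a (cdag c \<psi>) S else 0) - cdag a (cdag c (cdag d (cann b \<psi>))) S))"
    by (simp only: cdag_lin)
  thus ?thesis unfolding CCC[of a c d "cann b \<psi>"] by (auto simp: fun_eq_iff)
qed

lemma UD_ne: "(x, Up) \<noteq> (x, Dn)" by simp

lemma L_num: fixes a :: "'v::{finite,linorder}\<times>spin"
  shows "numop a (cdag (x,Up) (cdag (x,Dn) \<psi>)) = (\<lambda>S. cdag (x,Up) (cdag (x,Dn) (numop a \<psi>)) S
     + (if a = (x,Up) \<or> a = (x,Dn) then cdag (x,Up) (cdag (x,Dn) \<psi>) S else 0))"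
proof (cases "a = (x,Up)")
  case True
  have "cdag (x,Up) (cdag (x,Dn) (numop a \<psi>)) = (\<lambda>S. - cdag (x,Dn) (cdag (x,Up) (numop a \<psi>)) S)"
    by (rule CC_anti) simp
  thus ?thesis using True by (simp add: N1 N2 cdag_lin)
next
  case aU: False
  show ?thesis
  proof (cases "a = (x,Dn)")
    case True
    thus ?thesis by (simp add: N3 N1 N2 cdag_lin)
  next
    case False
    thus ?thesis using aU by (simp add: N3)
  qed
qed

lemma P_nU: fixes x :: "'v::{finite,linorder}" shows "cdag (x,Up) (cdag (x,Dn) (numop (x,Up) \<psi>)) = (\<lambda>S. 0::complex)"
proof -
  have "cdag (x,Up) (cdag (x,Dn) (numop (x,Up) \<psi>)) = (\<lambda>S. - cdag (x,Dn) (cdag (x,Up) (numop (x,Up) \<psi>)) S)"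
    by (rule CC_anti) simp
  thus ?thesis by (simp add: N2 cdag_lin)
qed

lemma P_nD: fixes x :: "'v::{finite,linorder}" shows "cdag (x,Up) (cdag (x,Dn) (numop (x,Dn) \<psi>)) = (\<lambda>S. 0::complex)"
  by (simp add: N2 cdag_lin)

lemma L_U: fixes x y :: "'v::{finite,linorder}"
  shows "numop (y,Up) (numop (y,Dn) (cdag (x,Up) (cdag (x,Dn) \<psi>))) =
    (\<lambda>S. cdag (x,Up) (cdag (x,Dn) (numop (y,Up) (numop (y,Dn) \<psi>))) S
        + (if y = x then cdag (x,Up) (cdag (x,Dn) \<psi>) S else 0))"
  by (simp add: L_num numop_lin P_nU P_nD fun_eq_iff)

definition Fh :: "(spin \<Rightarrow> spin \<Rightarrow> 'v \<Rightarrow> 'v \<Rightarrow> complex) \<Rightarrow> ('v::{finite,linorder}) fock \<Rightarrow> 'v \<Rightarrow> 'v \<Rightarrow> 'v \<Rightarrow> ('v \<times> spin) set \<Rightarrow> complex" where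
  "Fh t \<psi> r r' x S = (\<Sum>\<sigma>\<in>{Up, Dn}. \<Sum>\<sigma>'\<in>{Up, Dn}.
      t \<sigma> \<sigma>' r r' * ((if (r', \<sigma>') = (x, Up) then cdag (r, \<sigma>) (cdag (x, Dn) \<psi>) S else 0)
                         - (if (r', \<sigma>') = (x, Dn) then cdag (r, \<sigma>) (cdag (x, Up) \<psi>) S else 0))
    + t \<sigma>' \<sigma> r' r * ((if (r, \<sigma>) = (x, Up) then cdag (r', \<sigma>') (cdag (x, Dn) \<psi>) S else 0)
                         - (if (r, \<sigma>) = (x, Dn) then cdag (r', \<sigma>') (cdag (x, Up) \<psi>) S else 0)))"

lemma L_hopP: fixes a :: "'v::{finite,linorder}\<times>spin"
  shows "cdag a (cann b (cdag (x,Up) (cdag (x,Dn) \<psi>))) = (\<lambda>S. cdag (x,Up) (cdag (x,Dn) (cdag a (cann b \<psi>))) S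
   + ((if b = (x,Up) then cdag a (cdag (x,Dn) \<psi>) S else 0) - (if b = (x,Dn) then cdag a (cdag (x,Up) \<psi>) S else 0)))"
  by (simp add: L_hop fun_eq_iff)

lemma sum_if_delta: "(\<Sum>r\<in>UNIV. (c r :: complex) * (if r = (x::'v::finite) then v else 0)) = c x * v"
proof -
  have "(\<Sum>r\<in>UNIV. c r * (if r = x then v else 0)) = (\<Sum>r\<in>UNIV. if r = x then c r * v else 0)"
    by (intro sum.cong refl) simp
  also have "\<dots> = c x * v" by (simp add: sum.delta)
  finally show ?thesis .
qed

lemma step3:
  fixes t :: "spin \<Rightarrow> spin \<Rightarrow> 'v::{finite,linorder} \<Rightarrow> 'v \<Rightarrow> complex"
  shows "H_gen t \<mu> U E (cdag (x,Up) (cdag (x,Dn) \<psi>)) S =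
    cdag (x,Up) (cdag (x,Dn) (H_gen t \<mu> U E \<psi>)) S - (\<Sum>(r, r')\<in>E. Fh t \<psi> r r' x S)
    + complex_of_real (U x - \<mu> x Up - \<mu> x Dn) * cdag (x,Up) (cdag (x,Dn) \<psi>) S"
proof -
  have lP: "lin (\<lambda>\<psi>. cdag (x,Up) (cdag (x,Dn) \<psi>))" by (rule lin_comp[OF lin_cdag lin_cdag])
  note PL = lin_add[OF lP] lin_scal[OF lP] lin_neg[OF lP] lin_diff[OF lP] lin_sum[OF lP]
  show ?thesis
    unfolding H_gen_def
    apply (simp only: PL finite finite_insert finite.emptyI case_prod_unfold)
    apply (simp only: L_U)
    apply (simp add: L_hopP L_num Fh_def sum_if_delta case_prod_unfold distrib_left right_diff_distrib sum.distrib sum_subtractf)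
    apply (simp add: algebra_simps)
    done
qed

lemma lin_H: "lin (H_gen t \<mu> U (E :: ('v::{finite,linorder} \<times> 'v) set))"
  unfolding lin_def
proof (intro conjI allI)
  fix f g :: "'v fock"
  show "H_gen t \<mu> U E (\<lambda>S. f S + g S) = (\<lambda>S. H_gen t \<mu> U E f S + H_gen t \<mu> U E g S)"
    unfolding H_gen_def
    by (simp add: cdag_lin cann_lin numop_lin sum.distrib distrib_left fun_eq_iff case_prod_beta algebra_simps)
next
  fix c and f :: "'v fock"
  show "H_gen t \<mu> U E (\<lambda>S. c * f S) = (\<lambda>S. c * H_gen t \<mu> U E f S)"
    unfolding H_gen_def
    by (simp add: cdag_lin cann_lin numop_lin sum_distrib_left fun_eq_iff case_prod_beta algebra_simps)
qed

lemma Fh_far: "x \<noteq> r \<Longrightarrow> x \<noteq> r' \<Longrightarrow> Fh t \<psi> r r' x S = 0"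
  by (simp add: Fh_def)

lemma Fh_zero:
  fixes t :: "spin \<Rightarrow> spin \<Rightarrow> 'v::{finite,linorder} \<Rightarrow> 'v \<Rightarrow> complex"
  assumes rr: "r \<noteq> r'"
    and ec1: "e r * t Up Up r' r + e r' * t Dn Dn r r' = 0"
    and ec2: "e r * t Dn Dn r' r + e r' * t Up Up r r' = 0"
    and z1: "t Up Dn r r' = 0" and z2: "t Dn Up r r' = 0"
    and z3: "t Up Dn r' r = 0" and z4: "t Dn Up r' r = 0"
  shows "(\<Sum>x\<in>UNIV. e x * Fh t \<psi> r r' x S) = 0"
proof -
  have "(\<Sum>x\<in>UNIV. e x * Fh t \<psi> r r' x S) = (\<Sum>x\<in>{r, r'}. e x * Fh t \<psi> r r' x S)"
    by (rule sum.mono_neutral_right) (auto simp: Fh_far)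
  also have "\<dots> = e r * Fh t \<psi> r r' r S + e r' * Fh t \<psi> r r' r' S" using rr by simp
  also have "\<dots> = 0"
  proof -
    have a1: "cdag (r', Dn) (cdag (r, Up) \<psi>) S = - cdag (r, Up) (cdag (r', Dn) \<psi>) S"
      using fun_cong[OF CC_anti[of "(r', Dn)" "(r, Up)" \<psi>], of S] by simp
    have a2: "cdag (r, Dn) (cdag (r', Up) \<psi>) S = - cdag (r', Up) (cdag (r, Dn) \<psi>) S"
      using fun_cong[OF CC_anti[of "(r, Dn)" "(r', Up)" \<psi>], of S] by simp
    have "e r * Fh t \<psi> r r' r S + e r' * Fh t \<psi> r r' r' S
      = cdag (r', Up) (cdag (r, Dn) \<psi>) S * (e r * t Up Up r' r + e r' * t Dn Dn r r')
      + cdag (r, Up) (cdag (r', Dn) \<psi>) S * (e r * t Dn Dn r' r + e r' * t Up Up r r')"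
      using rr rr[symmetric] by (simp add: Fh_def z1 z2 z3 z4 a1 a2 algebra_simps)
    thus ?thesis using ec1 ec2 by simp
  qed
  finally show ?thesis .
qed

lemma comm_thm:
  fixes t :: "spin \<Rightarrow> spin \<Rightarrow> 'v::{finite,linorder} \<Rightarrow> 'v \<Rightarrow> complex"
  assumes simple: "simple_oriented E"
    and herm: "\<forall>(r, r')\<in>E. \<forall>\<sigma> \<sigma>'. t \<sigma> \<sigma>' r r' = cnj (t \<sigma>' \<sigma> r' r)"
    and no_soc: "\<forall>(r, r')\<in>E. t Up Dn r r' = 0 \<and> t Dn Up r r' = 0"
    and ec: "edge_cond t E (\<lambda>r. exp (\<i> * complex_of_real (\<phi> r)))"
    and en: "\<forall>r. U r - \<mu> r Up - \<mu> r Dn = En"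
  shows "commutator (H_gen t \<mu> U E) (eta_dag \<phi>) = (\<lambda>\<psi> S. complex_of_real En * eta_dag \<phi> \<psi> S)"
proof (intro ext)
  fix \<psi> S
  define e where "e = (\<lambda>r. exp (\<i> * complex_of_real (\<phi> r)))"
  let ?H = "H_gen t \<mu> U E"
  let ?P = "\<lambda>r \<psi>. cdag (r,Up) (cdag (r,Dn) \<psi>)"
  have eta: "eta_dag \<phi> \<psi>' = (\<lambda>S. \<Sum>r\<in>UNIV. e r * ?P r \<psi>' S)" for \<psi>'
    by (simp add: eta_dag_def e_def fun_eq_iff)
  have "?H (eta_dag \<phi> \<psi>) = (\<lambda>S. \<Sum>r\<in>UNIV. ?H (\<lambda>S. e r * ?P r \<psi> S) S)"
    unfolding eta by (rule lin_sum[OF lin_H]) simp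
  also have "\<dots> = (\<lambda>S. \<Sum>r\<in>UNIV. e r * ?H (?P r \<psi>) S)"
    by (simp add: lin_scal[OF lin_H])
  finally have h1: "?H (eta_dag \<phi> \<psi>) S = (\<Sum>r\<in>UNIV. e r * ?H (?P r \<psi>) S)" by simp
  have h2: "eta_dag \<phi> (?H \<psi>) S = (\<Sum>r\<in>UNIV. e r * ?P r (?H \<psi>) S)" by (simp add: eta)
  have edge0: "(\<Sum>x\<in>UNIV. e x * Fh t \<psi> a b x S) = 0" if ab: "(a, b) \<in> E" for a b
  proof (rule Fh_zero)
    show "a \<noteq> b" using simple ab by (auto simp: simple_oriented_def)
    have c: "\<forall>\<sigma> \<sigma>'. e a * t \<sigma>' \<sigma> b a * spin_s \<sigma> + e b * t (spin_bar \<sigma>) (spin_bar \<sigma>') a b * spin_s \<sigma>' = 0"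
      using ec ab unfolding edge_cond_def e_def by auto
    show "e a * t Up Up b a + e b * t Dn Dn a b = 0" using c[rule_format, of Up Up]
      by (simp add: spin_s_def spin_bar_def)
    have "e a * t Dn Dn b a + e b * t Up Up a b = - (e a * t Dn Dn b a * spin_s Dn + e b * t (spin_bar Dn) (spin_bar Dn) a b * spin_s Dn)"
      by (simp add: spin_s_def spin_bar_def)
    thus "e a * t Dn Dn b a + e b * t Up Up a b = 0" using c[rule_format, of Dn Dn] by simp
    show z1: "t Up Dn a b = 0" and z2: "t Dn Up a b = 0" using no_soc ab by auto
    have hh: "\<forall>\<sigma> \<sigma>'. t \<sigma> \<sigma>' a b = cnj (t \<sigma>' \<sigma> b a)" using herm ab by auto
    show "t Up Dn b a = 0" using hh[rule_format, of Dn Up] z2 by simp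
    show "t Dn Up b a = 0" using hh[rule_format, of Up Dn] z1 by simp
  qed
  have hop0: "(\<Sum>x\<in>UNIV. e x * (\<Sum>(a, b)\<in>E. Fh t \<psi> a b x S)) = 0"
  proof -
    have "(\<Sum>x\<in>UNIV. e x * (\<Sum>(a, b)\<in>E. Fh t \<psi> a b x S)) = (\<Sum>(a, b)\<in>E. \<Sum>x\<in>UNIV. e x * Fh t \<psi> a b x S)"
      by (simp add: sum_distrib_left case_prod_beta sum.swap[of _ UNIV E])
    also have "\<dots> = 0" by (rule sum.neutral) (auto simp: edge0)
    finally show ?thesis .
  qed
  have "commutator ?H (eta_dag \<phi>) \<psi> S = (\<Sum>r\<in>UNIV. e r * (?H (?P r \<psi>) S - ?P r (?H \<psi>) S))"
    unfolding commutator_def h1 h2 by (simp add: sum_subtractf right_diff_distrib)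
  also have "\<dots> = (\<Sum>r\<in>UNIV. complex_of_real En * (e r * ?P r \<psi> S) - e r * (\<Sum>(a, b)\<in>E. Fh t \<psi> a b r S))"
    using en by (intro sum.cong refl) (simp add: step3 algebra_simps)
  also have "\<dots> = complex_of_real En * eta_dag \<phi> \<psi> S"
    using hop0 by (simp add: sum_subtractf eta sum_distrib_left)
  finally show "commutator ?H (eta_dag \<phi>) \<psi> S = complex_of_real En * eta_dag \<phi> \<psi> S" .
qed


lemma all_spin: "(\<forall>\<sigma>. P \<sigma>) \<longleftrightarrow> P Up \<and> P Dn"
  by (metis spin.exhaust)

lemma edge_iff:
  fixes t :: "spin \<Rightarrow> spin \<Rightarrow> 'v \<Rightarrow> 'v \<Rightarrow> complex"
  assumes hh: "\<forall>\<sigma> \<sigma>'. t \<sigma> \<sigma>' a b = cnj (t \<sigma>' \<sigma> b a)"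
    and z1: "t Up Dn a b = 0" and z2: "t Dn Up a b = 0"
    and n1: "t Up Up a b \<noteq> 0" and n2: "t Dn Dn a b \<noteq> 0"
    and qa: "q a \<noteq> 0" and qb: "q b \<noteq> 0"
  shows "(\<forall>\<sigma> \<sigma>'. q a * t \<sigma>' \<sigma> b a * spin_s \<sigma> + q b * t (spin_bar \<sigma>) (spin_bar \<sigma>') a b * spin_s \<sigma>' = 0)
     \<longleftrightarrow> (q a / q b = - t Dn Dn a b / cnj (t Up Up a b) \<and> q a / q b = - t Up Up a b / cnj (t Dn Dn a b))"
proof -
  have r: "t \<sigma>' \<sigma> b a = cnj (t \<sigma> \<sigma>' a b)" for \<sigma> \<sigma>'
    using hh[rule_format, of \<sigma> \<sigma>'] by simp
  have c1: "cnj (t Up Up a b) \<noteq> 0" "cnj (t Dn Dn a b) \<noteq> 0" using n1 n2 by auto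
  show ?thesis
    unfolding all_spin using qa qb c1
    by (simp add: r z1 z2 spin_s_def spin_bar_def field_simps) (auto simp: algebra_simps; metis add.commute eq_neg_iff_add_eq_0 neg_eq_iff_add_eq_0)
qed

lemma expi_eq: "exp (\<i> * complex_of_real x) = exp (\<i> * complex_of_real y) \<longleftrightarrow> (\<exists>k::int. y = x + 2 * pi * of_int k)"
proof -
  have "exp (\<i> * complex_of_real x) = exp (\<i> * complex_of_real y) \<longleftrightarrow>
        (\<exists>n::int. \<i> * complex_of_real x = \<i> * complex_of_real y + (of_int (2 * n) * pi) * \<i>)"
    by (rule exp_eq)
  also have "\<dots> \<longleftrightarrow> (\<exists>n::int. x = y + 2 * pi * of_int n)"
    by (simp add: complex_eq_iff algebra_simps)
  also have "\<dots> \<longleftrightarrow> (\<exists>k::int. y = x + 2 * pi * of_int k)"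
  proof
    assume "\<exists>n::int. x = y + 2 * pi * of_int n"
    then obtain n :: int where "x = y + 2 * pi * of_int n" by blast
    thus "\<exists>k::int. y = x + 2 * pi * of_int k" by (intro exI[of _ "-n"]) simp
  next
    assume "\<exists>n::int. y = x + 2 * pi * of_int n"
    then obtain n :: int where "y = x + 2 * pi * of_int n" by blast
    thus "\<exists>k::int. x = y + 2 * pi * of_int k" by (intro exI[of _ "-n"]) simp
  qed
  finally show ?thesis .
qed

lemma phase_iff:
  fixes tt :: real
  assumes tt: "tt > 0"
    and hu: "tuu = complex_of_real tt * exp (\<i> * complex_of_real thu)"
    and hd: "tdd = complex_of_real tt * exp (\<i> * complex_of_real thd)"
  shows "(exp (\<i> * complex_of_real pa) / exp (\<i> * complex_of_real pb) = - tdd / cnj tuu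
          \<and> exp (\<i> * complex_of_real pa) / exp (\<i> * complex_of_real pb) = - tuu / cnj tdd)
     \<longleftrightarrow> (\<exists>k::int. thu + thd + pi = pa - pb + 2 * pi * of_int k)"
proof -
  have cj: "cnj (exp (\<i> * complex_of_real th)) = exp (- (\<i> * complex_of_real th))" for th
    by (simp add: exp_cnj)
  have ttn: "complex_of_real tt \<noteq> 0" using tt by simp
  have R1: "- tdd / cnj tuu = exp (\<i> * complex_of_real (thu + thd + pi))"
    using ttn by (simp add: hu hd cj exp_minus field_simps distrib_left exp_add)
  have R2: "- tuu / cnj tdd = exp (\<i> * complex_of_real (thu + thd + pi))"
    using ttn by (simp add: hu hd cj exp_minus field_simps distrib_left exp_add)
  have L: "exp (\<i> * complex_of_real pa) / exp (\<i> * complex_of_real pb) = exp (\<i> * complex_of_real (pa - pb))"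
    by (simp add: exp_diff[symmetric] right_diff_distrib)
  show ?thesis unfolding R1 R2 L expi_eq by simp
qed

theorem mainTheorem5:
  fixes t :: "spin \<Rightarrow> spin \<Rightarrow> 'v::{finite,linorder} \<Rightarrow> 'v \<Rightarrow> complex"
    and \<mu> :: "'v \<Rightarrow> spin \<Rightarrow> real"
    and U :: "'v \<Rightarrow> real"
    and E :: "('v \<times> 'v) set"
  assumes simple: "simple_oriented E"
    and conn: "graph_connected E"
    and herm: "\<forall>(r, r')\<in>E. \<forall>\<sigma> \<sigma>'. t \<sigma> \<sigma>' r r' = cnj (t \<sigma>' \<sigma> r' r)"
    and no_soc: "\<forall>(r, r')\<in>E. t Up Dn r r' = 0 \<and> t Dn Up r r' = 0"
    and nonzero: "\<forall>(r, r')\<in>E. t Up Up r r' \<noteq> 0 \<and> t Dn Dn r r' \<noteq> 0"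
  shows
    "(\<forall>q :: 'v \<Rightarrow> complex. (\<forall>r. q r \<noteq> 0) \<longrightarrow>
        (edge_cond t E q \<longleftrightarrow>
          (\<forall>(r, r')\<in>E. q r / q r' = - t Dn Dn r r' / cnj (t Up Up r r')
                      \<and> q r / q r' = - t Up Up r r' / cnj (t Dn Dn r r'))))
   \<and> (\<forall>q :: 'v \<Rightarrow> complex. (\<forall>r. q r \<noteq> 0) \<and> edge_cond t E q \<longrightarrow>
        (\<forall>(r, r')\<in>E. cmod (t Up Up r r') = cmod (t Dn Dn r r'))
        \<and> (\<forall>r r'. cmod (q r) = cmod (q r')))
   \<and> (\<forall>(\<phi> :: 'v \<Rightarrow> real) (tt :: 'v \<Rightarrow> 'v \<Rightarrow> real) (\<theta>uu :: 'v \<Rightarrow> 'v \<Rightarrow> real) (\<theta>dd :: 'v \<Rightarrow> 'v \<Rightarrow> real).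
        (\<forall>(r, r')\<in>E. tt r r' > 0
            \<and> t Up Up r r' = complex_of_real (tt r r') * exp (\<i> * complex_of_real (\<theta>uu r r'))
            \<and> t Dn Dn r r' = complex_of_real (tt r r') * exp (\<i> * complex_of_real (\<theta>dd r r'))) \<longrightarrow>
        (edge_cond t E (\<lambda>r. exp (\<i> * complex_of_real (\<phi> r))) \<longleftrightarrow>
          (\<forall>(r, r')\<in>E. \<exists>k :: int. \<theta>uu r r' + \<theta>dd r r' + pi = \<phi> r - \<phi> r' + 2 * pi * of_int k)))
   \<and> (\<forall>(\<phi> :: 'v \<Rightarrow> real) (\<E> :: real).
        edge_cond t E (\<lambda>r. exp (\<i> * complex_of_real (\<phi> r)))
        \<and> (\<forall>r. U r - \<mu> r Up - \<mu> r Dn = \<E>) \<longrightarrow>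
        commutator (H_gen t \<mu> U E) (eta_dag \<phi>) = (\<lambda>\<psi> S. complex_of_real \<E> * eta_dag \<phi> \<psi> S))"
proof -
  have P1: "edge_cond t E q \<longleftrightarrow>
          (\<forall>(r, r')\<in>E. q r / q r' = - t Dn Dn r r' / cnj (t Up Up r r')
                      \<and> q r / q r' = - t Up Up r r' / cnj (t Dn Dn r r'))"
    if qn: "\<forall>r. q r \<noteq> 0" for q :: "'v \<Rightarrow> complex"
  proof -
    have "(\<forall>\<sigma> \<sigma>'. q a * t \<sigma>' \<sigma> b a * spin_s \<sigma> + q b * t (spin_bar \<sigma>) (spin_bar \<sigma>') a b * spin_s \<sigma>' = 0)
     \<longleftrightarrow> (q a / q b = - t Dn Dn a b / cnj (t Up Up a b) \<and> q a / q b = - t Up Up a b / cnj (t Dn Dn a b))"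
      if ab: "(a, b) \<in> E" for a b
      by (rule edge_iff) (use herm no_soc nonzero ab qn in auto)
    hence eq: "\<And>x. x \<in> E \<Longrightarrow> (case x of (a, b) \<Rightarrow> \<forall>\<sigma> \<sigma>'. q a * t \<sigma>' \<sigma> b a * spin_s \<sigma> + q b * t (spin_bar \<sigma>) (spin_bar \<sigma>') a b * spin_s \<sigma>' = 0)
       = (case x of (a, b) \<Rightarrow> q a / q b = - t Dn Dn a b / cnj (t Up Up a b) \<and> q a / q b = - t Up Up a b / cnj (t Dn Dn a b))"
      by (simp add: case_prod_beta)
    show ?thesis unfolding edge_cond_def by (rule ball_cong[OF refl eq])
  qed
  have P2: "(\<forall>(r, r')\<in>E. cmod (t Up Up r r') = cmod (t Dn Dn r r'))
        \<and> (\<forall>r r'. cmod (q r) = cmod (q r'))"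
    if qn: "\<forall>r. q r \<noteq> 0" and ec: "edge_cond t E q" for q :: "'v \<Rightarrow> complex"
  proof -
    have rat: "q a / q b = - t Dn Dn a b / cnj (t Up Up a b) \<and> q a / q b = - t Up Up a b / cnj (t Dn Dn a b)"
      if ab: "(a, b) \<in> E" for a b using P1[OF qn] ec ab by auto
    have tm: "cmod (t Up Up a b) = cmod (t Dn Dn a b)" if ab: "(a, b) \<in> E" for a b
    proof -
      have n: "t Up Up a b \<noteq> 0" "t Dn Dn a b \<noteq> 0" using nonzero ab by auto
      hence "cnj (t Up Up a b) \<noteq> 0" "cnj (t Dn Dn a b) \<noteq> 0" by auto
      have r2: "t Dn Dn a b / cnj (t Up Up a b) = t Up Up a b / cnj (t Dn Dn a b)"
        using rat[OF ab] by (metis minus_divide_left neg_equal_iff_equal)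
      have "t Dn Dn a b * cnj (t Dn Dn a b) = t Up Up a b * cnj (t Up Up a b)"
        using r2 \<open>cnj (t Up Up a b) \<noteq> 0\<close> \<open>cnj (t Dn Dn a b) \<noteq> 0\<close> by (simp add: frac_eq_eq)
      hence "complex_of_real ((cmod (t Dn Dn a b))\<^sup>2) = complex_of_real ((cmod (t Up Up a b))\<^sup>2)"
        by (simp only: complex_norm_square)
      hence "(cmod (t Dn Dn a b))\<^sup>2 = (cmod (t Up Up a b))\<^sup>2" using of_real_eq_iff by blast
      thus ?thesis by (simp add: power2_eq_iff_nonneg)
    qed
    have qm: "cmod (q a) = cmod (q b)" if ab: "(a, b) \<in> E" for a b
    proof -
      have "cmod (q a / q b) = cmod (t Dn Dn a b) / cmod (t Up Up a b)"
        using rat[OF ab] by (simp add: norm_divide)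
      also have "\<dots> = 1" using tm[OF ab] nonzero ab by auto
      finally show ?thesis using qn by (simp add: norm_divide field_simps)
    qed
    have "cmod (q x) = cmod (q y)" for x y
    proof -
      have "(x, y) \<in> (E \<union> E\<inverse>)\<^sup>*" using conn by (simp add: graph_connected_def)
      thus ?thesis
      proof (induction rule: rtrancl_induct)
        case base thus ?case by simp
      next
        case (step y z)
        thus ?case using qm by auto
      qed
    qed
    thus ?thesis using tm by auto
  qed
  have P3: "edge_cond t E (\<lambda>r. exp (\<i> * complex_of_real (\<phi> r))) \<longleftrightarrow>
          (\<forall>(r, r')\<in>E. \<exists>k :: int. \<theta>uu r r' + \<theta>dd r r' + pi = \<phi> r - \<phi> r' + 2 * pi * of_int k)"
    if hyp: "\<forall>(r, r')\<in>E. tt r r' > 0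
            \<and> t Up Up r r' = complex_of_real (tt r r') * exp (\<i> * complex_of_real (\<theta>uu r r'))
            \<and> t Dn Dn r r' = complex_of_real (tt r r') * exp (\<i> * complex_of_real (\<theta>dd r r'))"
    for \<phi> :: "'v \<Rightarrow> real" and tt \<theta>uu \<theta>dd :: "'v \<Rightarrow> 'v \<Rightarrow> real"
  proof -
    have e: "edge_cond t E (\<lambda>r. exp (\<i> * complex_of_real (\<phi> r))) \<longleftrightarrow>
      (\<forall>(r, r')\<in>E. exp (\<i> * complex_of_real (\<phi> r)) / exp (\<i> * complex_of_real (\<phi> r')) = - t Dn Dn r r' / cnj (t Up Up r r')
                      \<and> exp (\<i> * complex_of_real (\<phi> r)) / exp (\<i> * complex_of_real (\<phi> r')) = - t Up Up r r' / cnj (t Dn Dn r r'))"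
      by (rule P1) simp
    have "(exp (\<i> * complex_of_real (\<phi> a)) / exp (\<i> * complex_of_real (\<phi> b)) = - t Dn Dn a b / cnj (t Up Up a b)
                      \<and> exp (\<i> * complex_of_real (\<phi> a)) / exp (\<i> * complex_of_real (\<phi> b)) = - t Up Up a b / cnj (t Dn Dn a b))
      \<longleftrightarrow> (\<exists>k :: int. \<theta>uu a b + \<theta>dd a b + pi = \<phi> a - \<phi> b + 2 * pi * of_int k)"
      if ab: "(a, b) \<in> E" for a b
      by (rule phase_iff) (use hyp ab in auto)
    hence eq: "\<And>x. x \<in> E \<Longrightarrow> (case x of (a, b) \<Rightarrow> exp (\<i> * complex_of_real (\<phi> a)) / exp (\<i> * complex_of_real (\<phi> b)) = - t Dn Dn a b / cnj (t Up Up a b)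
                      \<and> exp (\<i> * complex_of_real (\<phi> a)) / exp (\<i> * complex_of_real (\<phi> b)) = - t Up Up a b / cnj (t Dn Dn a b))
       = (case x of (a, b) \<Rightarrow> \<exists>k :: int. \<theta>uu a b + \<theta>dd a b + pi = \<phi> a - \<phi> b + 2 * pi * of_int k)"
      by (simp add: case_prod_beta)
    show ?thesis unfolding e by (rule ball_cong[OF refl eq])
  qed
  show ?thesis
    apply (intro conjI)
       apply (intro allI impI)
       apply (erule P1)
      apply (intro allI impI)
      apply (erule conjE)
      apply (erule (1) P2)
     apply (intro allI impI)
     apply (erule P3)
    apply (intro allI impI)
    apply (erule conjE)
    apply (rule comm_thm[OF simple herm no_soc])
     apply assumption+
    done
qed

end
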